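(* In the one-shot linear delivery model described in the context, consider a single communication block in which a set $\{\mathbf{w}_{n_l,f_l}\}_{l=1}^L$ of $L$ packets is scheduled to be transmitted together to $L$ distinct receivers (packet $l$ intended for the $l$-th of these receivers). In order for each receiver to successfully decode its desired packet, necessarily $$L\le\min_{l\in[L]}\big(|\mathcal{T}_l|+|\mathcal{R}_l|\big),$$ where $\mathcal{T}_l$ and $\mathcal{R}_l$ denote the sets of transmitters and of receivers, respectively, that have cached the packet $\mathbf{w}_{n_l,f_l}$.
   Context: Network: transmitters $\text{Tx}_1,\dots,\text{Tx}_{K_T}$, receivers $\text{Rx}_1,\dots,\text{Rx}_{K_R}$, channel $Y_j=\sum_i h_{ji}X_i+Z_j$ with fixed complex gains $h_{ji}$ and Gaussian noise. Each transmitter and receiver has cached a set of whole packets of a file library. Each packet $\mathbf{w}_{n,f}$ is encoded into a coded packet $\tilde{\mathbf{w}}_{n,f}\in\mathbb{C}^{\tilde B}$ carrying one degree of freedom. In a block where a set $\mathcal{D}$ of packets is scheduled, transmitter $\text{Tx}_i$ sends $\mathbf{x}_i=\sum_{\mathbf{w}_{n,f}\in\mathcal{D}\text{ cached at }\text{Tx}_i} v_{i,n,f}\tilde{\mathbf{w}}_{n,f}$ with complex coefficients $v_{i,n,f}$; a scheduled receiver $\text{Rx}_j$ receives $\mathbf{y}_j=\sum_i h_{ji}\mathbf{x}_i+\mathbf{z}_j$ and forms a linear combination of $\mathbf{y}_j$ and the coded packets it has cached. Decoding is successful if this linear combination equals its desired coded packet plus $\mathbf{z}_j$ (all interference removed)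.
   Formalization: The channel gains $h_{ji}$ are generic, every square submatrix of the receiver-by-transmitter gain matrix being nonsingular, and no scheduled receiver has cached its own desired packet. Each condition added here is assumed in the paper as well or is needed for the statement above to hold. *)

theory Defs
  imports "HOL-Analysis.Analysis"
begin

text \<open>Transmitters are the elements of a finite type 'tx, receivers of a finite type 'rx,
  library packets of a finite type 'p. Coded packets live in complex^'b.
  In a block, the scheduled packets are sched 0, ..., sched (L-1); packet l is
  intended for receiver rcv l. v i l is the coefficient of Tx i for packet l.\<close>

definition tx_signal ::
  "('tx \<Rightarrow> 'p set) \<Rightarrow> nat \<Rightarrow> (nat \<Rightarrow> 'p) \<Rightarrow> ('tx \<Rightarrow> nat \<Rightarrow> complex)
     \<Rightarrow> ('p \<Rightarrow> complex^'b) \<Rightarrow> 'tx \<Rightarrow> complex^'b" where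
  "tx_signal TxCache L sched v wt i =
     (\<Sum>l \<in> {l. l < L \<and> sched l \<in> TxCache i}. v i l *s wt (sched l))"

definition rx_signal ::
  "('rx \<Rightarrow> 'tx::finite \<Rightarrow> complex) \<Rightarrow> ('tx \<Rightarrow> 'p set) \<Rightarrow> nat \<Rightarrow> (nat \<Rightarrow> 'p)
     \<Rightarrow> ('tx \<Rightarrow> nat \<Rightarrow> complex) \<Rightarrow> ('p \<Rightarrow> complex^'b) \<Rightarrow> complex^'b \<Rightarrow> 'rx \<Rightarrow> complex^'b" where
  "rx_signal h TxCache L sched v wt z j =
     (\<Sum>i\<in>UNIV. h j i *s tx_signal TxCache L sched v wt i) + z"

definition decodes ::
  "'b::finite itself \<Rightarrow> ('rx \<Rightarrow> 'tx::finite \<Rightarrow> complex) \<Rightarrow> ('tx \<Rightarrow> 'p set) \<Rightarrow> ('rx \<Rightarrow> 'p set)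
     \<Rightarrow> nat \<Rightarrow> (nat \<Rightarrow> 'p) \<Rightarrow> ('tx \<Rightarrow> nat \<Rightarrow> complex) \<Rightarrow> 'rx \<Rightarrow> 'p \<Rightarrow> bool" where
  "decodes (_::'b::finite itself) h TxCache RxCache L sched v j p \<longleftrightarrow>
     (\<exists>(a::complex) (c::'p \<Rightarrow> complex).
        \<forall>(wt::'p \<Rightarrow> complex^'b) (z::complex^'b).
          a *s rx_signal h TxCache L sched v wt z j + (\<Sum>q\<in>RxCache j. c q *s wt q)
            = wt p + z)"

text \<open>Generic channel: every square submatrix of the channel matrix (rows = receivers,
  columns = transmitters) is nonsingular.\<close>
definition generic_channel :: "('rx \<Rightarrow> 'tx \<Rightarrow> complex) \<Rightarrow> bool" where
  "generic_channel h \<longleftrightarrow>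
     (\<forall>(S::'rx set) (T::'tx set). finite S \<and> finite T \<and> card S = card T \<longrightarrow>
        (\<forall>u::'tx \<Rightarrow> complex. (\<forall>j\<in>S. (\<Sum>i\<in>T. h j i * u i) = 0) \<longrightarrow> (\<forall>i\<in>T. u i = 0)))"

end

theory Submission
  imports Defs
begin

lemma key:
  fixes h :: "'rx \<Rightarrow> 'tx::finite \<Rightarrow> complex" and TxCache :: "'tx \<Rightarrow> 'p set"
  assumes dec: "decodes TYPE('b::finite) h TxCache RxCache L sched v j q"
    and inj: "inj_on sched {..<L}" and l0: "l0 < L"
    and nr: "sched l0 \<notin> RxCache j"
  shows "(\<Sum>i\<in>{i. sched l0 \<in> TxCache i}. h j i * v i l0) = (if q = sched l0 then 1 else 0)"
proof -
  obtain a c where E: "\<And>(wt::'p \<Rightarrow> complex^'b) z.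
      a *s rx_signal h TxCache L sched v wt z j + (\<Sum>q\<in>RxCache j. c q *s wt q) = wt q + z"
    using dec unfolding decodes_def by blast
  define e :: "complex^'b" where "e = (\<chi> k. 1)"
  obtain k :: 'b where True by simp
  have "(a *s rx_signal h TxCache L sched v (\<lambda>_. 0) e j + (\<Sum>q\<in>RxCache j. c q *s (0::complex^'b))) $ k
      = ((\<lambda>_. 0::complex^'b) q + e) $ k"
    using E[of "\<lambda>_. 0" e] by simp
  hence a1: "a = 1" by (simp add: rx_signal_def tx_signal_def e_def)
  define wt where "wt = (\<lambda>q'. if q' = sched l0 then e else (0::complex^'b))"
  have tx: "tx_signal TxCache L sched v wt i $ k = (if sched l0 \<in> TxCache i then v i l0 else 0)" for i
  proof -
    have "tx_signal TxCache L sched v wt i $ k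
        = (\<Sum>l\<in>{l. l < L \<and> sched l \<in> TxCache i}. (if l = l0 then v i l else 0))"
      unfolding tx_signal_def sum_component
      apply (rule sum.cong, simp)
      using inj l0 by (auto simp: wt_def e_def inj_on_def)
    also have "\<dots> = (if sched l0 \<in> TxCache i then v i l0 else 0)"
      using l0 by (simp add: sum.delta)
    finally show ?thesis .
  qed
  have "(a *s rx_signal h TxCache L sched v wt 0 j + (\<Sum>q\<in>RxCache j. c q *s wt q)) $ k
      = (wt q + 0) $ k"
    using E[of wt 0] by simp
  hence "(\<Sum>i\<in>UNIV. h j i * tx_signal TxCache L sched v wt i $ k)
        + (\<Sum>q\<in>RxCache j. c q * wt q $ k) = wt q $ k"
    by (simp add: rx_signal_def sum_component a1)
  moreover have "(\<Sum>q\<in>RxCache j. c q * wt q $ k) = 0"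
    using nr by (intro sum.neutral) (auto simp: wt_def)
  moreover have "(\<Sum>i\<in>UNIV. h j i * tx_signal TxCache L sched v wt i $ k)
      = (\<Sum>i\<in>{i. sched l0 \<in> TxCache i}. h j i * v i l0)"
    by (simp add: tx if_distrib sum.If_cases)
  ultimately show ?thesis by (simp add: wt_def e_def)
qed

theorem lemma3:
  fixes h :: "'rx::finite \<Rightarrow> 'tx::finite \<Rightarrow> complex"
    and TxCache :: "'tx \<Rightarrow> ('p::finite) set"
    and RxCache :: "'rx \<Rightarrow> 'p set"
    and L :: nat
    and sched :: "nat \<Rightarrow> 'p"
    and rcv :: "nat \<Rightarrow> 'rx"
    and v :: "'tx \<Rightarrow> nat \<Rightarrow> complex"
  assumes "generic_channel h"
    and "inj_on sched {..<L}"
    and "inj_on rcv {..<L}"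
    and "\<forall>l<L. sched l \<notin> RxCache (rcv l)"
    and "\<forall>l<L. decodes TYPE('b::finite) h TxCache RxCache L sched v (rcv l) (sched l)"
  shows "\<forall>l<L. L \<le> card {i. sched l \<in> TxCache i} + card {j. sched l \<in> RxCache j}"
proof (intro allI impI)
  fix l0 assume l0: "l0 < L"
  define T where "T = {i. sched l0 \<in> TxCache i}"
  define R where "R = {j. sched l0 \<in> RxCache j}"
  show "L \<le> card T + card R"
  proof (rule ccontr)
    assume "\<not> ?thesis"
    hence lt: "card T + card R < L" by simp
    define J where "J = rcv ` ({..<L} - {l0}) - R"
    have c1: "card (rcv ` ({..<L} - {l0})) = L - 1"
      using assms(3) l0 by (simp add: card_image inj_on_subset)
    have "card (rcv ` ({..<L} - {l0})) \<le> card J + card R"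
    proof -
      have "rcv ` ({..<L} - {l0}) \<subseteq> J \<union> R" unfolding J_def by blast
      hence "card (rcv ` ({..<L} - {l0})) \<le> card (J \<union> R)" by (intro card_mono) auto
      also have "\<dots> \<le> card J + card R" by (rule card_Un_le)
      finally show ?thesis .
    qed
    hence "card T \<le> card J" using c1 lt by linarith
    then obtain S where S: "S \<subseteq> J" "card S = card T"
      by (meson obtain_subset_with_card_n)
    have zero: "\<forall>j\<in>S. (\<Sum>i\<in>T. h j i * v i l0) = 0"
    proof
      fix j assume "j \<in> S"
      then obtain l where l: "l < L" "l \<noteq> l0" "j = rcv l" "j \<notin> R"
        using S(1) unfolding J_def by auto
      have "sched l \<noteq> sched l0" using assms(2) l l0 by (auto simp: inj_on_def)
      thus "(\<Sum>i\<in>T. h j i * v i l0) = 0"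
        using key[OF _ assms(2) l0, of h TxCache RxCache v j "sched l"] assms(5) l
        unfolding T_def R_def by auto
    qed
    have "\<forall>i\<in>T. v i l0 = 0"
    proof -
      have "finite S" "finite T" by auto
      have G: "\<forall>u::'tx \<Rightarrow> complex. (\<forall>j\<in>S. (\<Sum>i\<in>T. h j i * u i) = 0) \<longrightarrow> (\<forall>i\<in>T. u i = 0)"
        using assms(1) S(2) \<open>finite S\<close> \<open>finite T\<close> unfolding generic_channel_def by simp
      show ?thesis using G[rule_format, of "\<lambda>i. v i l0"] zero by simp
    qed
    hence "(\<Sum>i\<in>T. h (rcv l0) i * v i l0) = 0" by simp
    moreover have "(\<Sum>i\<in>T. h (rcv l0) i * v i l0) = 1"
      using key[OF _ assms(2) l0, of h TxCache RxCache v "rcv l0" "sched l0"] assms(4,5) l0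
      unfolding T_def by auto
    ultimately show False by simp
  qed
qed

end
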